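(* Write the Hilbert series of $R_{3,2}$ as $\frac{q(t)}{(1-t^2)(1-t^3)}$. Then $q(t)=1+t^4+t^5+t^6+t^8+t^9+t^{10}+\cdots$ (i.e., the coefficients of $t^0,\dots,t^{10}$ are $1,0,0,0,1,1,1,0,1,1,1$). Consequently $R_{3,2}$ is not Cohen--Macaulay.
   Context: $R_{3,2}$ is the subalgebra of $\mathbb{C}[x,y]$ generated by $P_i=3x^i+2y^i+(-3x-2y)^i$, $i\ge2$, graded by $\deg x=\deg y=1$. *)

theory Defs
  imports "HOL-Computational_Algebra.Polynomial"
          "HOL-Computational_Algebra.Formal_Power_Series"
          "HOL-Library.Extended_Nat"
begin

text \<open>C[x,y] is modelled as complex poly poly: polynomials in y whose coefficients
are polynomials in x.  The monomial x^j y^i is coeff (coeff p i) j.\<close>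

type_synonym bipoly = "complex poly poly"

definition X_var :: bipoly where "X_var = [:[:0, 1:]:]"
definition Y_var :: bipoly where "Y_var = [:0, 1:]"

definition cscale :: "complex \<Rightarrow> bipoly \<Rightarrow> bipoly" where
  "cscale c p = smult [:c:] p"

definition P32 :: "nat \<Rightarrow> bipoly" where
  "P32 i = 3 * X_var ^ i + 2 * Y_var ^ i + (- 3 * X_var - 2 * Y_var) ^ i"

inductive_set alg_gen :: "bipoly set \<Rightarrow> bipoly set" for G where
  const: "[:[:c:]:] \<in> alg_gen G"
| gen: "g \<in> G \<Longrightarrow> g \<in> alg_gen G"
| add: "a \<in> alg_gen G \<Longrightarrow> b \<in> alg_gen G \<Longrightarrow> a + b \<in> alg_gen G"
| mult: "a \<in> alg_gen G \<Longrightarrow> b \<in> alg_gen G \<Longrightarrow> a * b \<in> alg_gen G"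

definition R32 :: "bipoly set" where
  "R32 = alg_gen (P32 ` {2..})"

definition homog :: "nat \<Rightarrow> bipoly \<Rightarrow> bool" where
  "homog d p \<longleftrightarrow> (\<forall>i j. coeff (coeff p i) j \<noteq> 0 \<longrightarrow> i + j = d)"

definition graded_piece :: "bipoly set \<Rightarrow> nat \<Rightarrow> bipoly set" where
  "graded_piece A d = {p \<in> A. homog d p}"

definition hilbert_series :: "bipoly set \<Rightarrow> int fps" where
  "hilbert_series A = Abs_fps (\<lambda>d. int (vector_space.dim cscale (graded_piece A d)))"

definition ideal_in :: "bipoly set \<Rightarrow> bipoly set \<Rightarrow> bool" where
  "ideal_in A I \<longleftrightarrow> I \<subseteq> A \<and> 0 \<in> I \<and> (\<forall>a\<in>I. \<forall>b\<in>I. a + b \<in> I)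
      \<and> (\<forall>r\<in>A. \<forall>a\<in>I. r * a \<in> I)"

definition prime_in :: "bipoly set \<Rightarrow> bipoly set \<Rightarrow> bool" where
  "prime_in A P \<longleftrightarrow> ideal_in A P \<and> P \<noteq> A \<and>
      (\<forall>a\<in>A. \<forall>b\<in>A. a * b \<in> P \<longrightarrow> a \<in> P \<or> b \<in> P)"

definition krull_dim :: "bipoly set \<Rightarrow> enat" where
  "krull_dim A = Sup {enat n | n. \<exists>ch :: nat \<Rightarrow> bipoly set.
      (\<forall>i\<le>n. prime_in A (ch i)) \<and> (\<forall>i<n. ch i \<subset> ch (Suc i))}"

definition gen_ideal :: "bipoly set \<Rightarrow> bipoly list \<Rightarrow> bipoly set" where
  "gen_ideal A fs = {(\<Sum>i<length fs. r i * fs ! i) | r. \<forall>i. r i \<in> A}"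

definition irrelevant :: "bipoly set \<Rightarrow> bipoly set" where
  "irrelevant A = {p \<in> A. coeff (coeff p 0) 0 = 0}"

definition regular_seq :: "bipoly set \<Rightarrow> bipoly list \<Rightarrow> bool" where
  "regular_seq A fs \<longleftrightarrow> set fs \<subseteq> irrelevant A \<and> gen_ideal A fs \<noteq> A \<and>
     (\<forall>i<length fs. \<forall>a\<in>A. a * fs ! i \<in> gen_ideal A (take i fs)
                            \<longrightarrow> a \<in> gen_ideal A (take i fs))"

definition depth :: "bipoly set \<Rightarrow> enat" where
  "depth A = Sup {enat (length fs) | fs. regular_seq A fs}"

definition cohen_macaulay :: "bipoly set \<Rightarrow> bool" where
  "cohen_macaulay A \<longleftrightarrow> depth A = krull_dim A"

end

theory Submission
  imports Defs
begin


interpretation cs: vector_space cscale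
proof
  fix a b :: complex and x y :: bipoly
  show "cscale a (x + y) = cscale a x + cscale a y" by (simp add: cscale_def smult_add_right)
  have "[:a + b:] = [:a:] + [:b:]" by simp
  then show "cscale (a + b) x = cscale a x + cscale b x" unfolding cscale_def by (metis smult_add_left)
  show "cscale a (cscale b x) = cscale (a * b) x" by (simp add: cscale_def mult.commute)
  show "cscale 1 x = x" by (simp add: cscale_def one_pCons[symmetric])
qed

definition eval2 :: "bipoly \<Rightarrow> complex \<Rightarrow> complex \<Rightarrow> complex" where
  "eval2 p x y = poly (poly p [:y:]) x"

lemma eval2_add[simp]: "eval2 (p + q) x y = eval2 p x y + eval2 q x y"
  by (simp add: eval2_def)
lemma eval2_diff[simp]: "eval2 (p - q) x y = eval2 p x y - eval2 q x y"
  by (simp add: eval2_def)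
lemma eval2_minus[simp]: "eval2 (- p) x y = - eval2 p x y"
  by (simp add: eval2_def)
lemma eval2_mult[simp]: "eval2 (p * q) x y = eval2 p x y * eval2 q x y"
  by (simp add: eval2_def)
lemma eval2_power[simp]: "eval2 (p ^ n) x y = eval2 p x y ^ n"
  by (simp add: eval2_def poly_power)
lemma eval2_numeral[simp]: "eval2 (numeral n) x y = numeral n"
  by (simp add: eval2_def)
lemma eval2_one[simp]: "eval2 1 x y = 1"
  by (simp add: eval2_def)
lemma eval2_zero[simp]: "eval2 0 x y = 0"
  by (simp add: eval2_def)
lemma eval2_X[simp]: "eval2 X_var x y = x"
  by (simp add: eval2_def X_var_def)
lemma eval2_Y[simp]: "eval2 Y_var x y = y"
  by (simp add: eval2_def Y_var_def)
lemma eval2_cscale[simp]: "eval2 (cscale c p) x y = c * eval2 p x y"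
  by (simp add: eval2_def cscale_def)
lemma eval2_const[simp]: "eval2 [:[:c:]:] x y = c"
  by (simp add: eval2_def)
lemma eval2_sum: "eval2 (sum f A) x y = (\<Sum>a\<in>A. eval2 (f a) x y)"
  by (induction A rule: infinite_finite_induct) auto

lemma eval2_P32[simp]: "eval2 (P32 i) x y = 3 * x ^ i + 2 * y ^ i + (- 3 * x - 2 * y) ^ i"
  by (simp add: P32_def)


lemma homog_0[simp]: "homog d 0"
  by (simp add: homog_def)

lemma homog_add: "homog d p \<Longrightarrow> homog d q \<Longrightarrow> homog d (p + q)"
  unfolding homog_def by (metis add.right_neutral coeff_add)

lemma homog_minus: "homog d p \<Longrightarrow> homog d (- p)"
  unfolding homog_def by simp

lemma homog_diff: "homog d p \<Longrightarrow> homog d q \<Longrightarrow> homog d (p - q)"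
  unfolding homog_def by (metis coeff_diff diff_self)

lemma homog_cscale: "homog d p \<Longrightarrow> homog d (cscale c p)"
  unfolding homog_def cscale_def by simp

lemma homog_mult:
  assumes "homog a p" "homog b q"
  shows "homog (a + b) (p * q)"
  unfolding homog_def
proof (intro allI impI)
  fix n j
  assume nz: "coeff (coeff (p * q) n) j \<noteq> 0"
  show "n + j = a + b"
  proof (rule ccontr)
    assume ne: "n + j \<noteq> a + b"
    have "coeff (coeff (p * q) n) j = (\<Sum>k\<le>n. coeff (coeff p k * coeff q (n - k)) j)"
      by (simp add: coeff_mult coeff_sum)
    also have "\<dots> = (\<Sum>k\<le>n. \<Sum>l\<le>j. coeff (coeff p k) l * coeff (coeff q (n - k)) (j - l))"
      by (simp add: coeff_mult)
    also have "\<dots> = 0"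
    proof (intro sum.neutral ballI)
      fix k l assume k: "k \<in> {..n}" and l: "l \<in> {..j}"
      show "coeff (coeff p k) l * coeff (coeff q (n - k)) (j - l) = 0"
      proof (rule ccontr)
        assume "coeff (coeff p k) l * coeff (coeff q (n - k)) (j - l) \<noteq> 0"
        then have "k + l = a" "n - k + (j - l) = b" using assms unfolding homog_def by auto
        then show False using k l ne by auto
      qed
    qed
    finally show False using nz by simp
  qed
qed

lemma homog_mult': "homog a p \<Longrightarrow> homog b q \<Longrightarrow> d = a + b \<Longrightarrow> homog d (p * q)"
  using homog_mult by blast

lemma homog_power: "homog a p \<Longrightarrow> homog (n * a) (p ^ n)"
proof (induction n)
  case 0
  then show ?case by (simp add: homog_def coeff_1)
next
  case (Suc n)
  then show ?case using homog_mult[of a p "n * a" "p ^ n"] by (simp add: add.commute)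
qed

lemma homog_const: "homog 0 [:[:c:]:]"
  by (simp add: homog_def coeff_pCons split: nat.splits)

lemma homog_numeral: "homog 0 (numeral n :: bipoly)"
proof -
  have "(numeral n :: bipoly) = [:[:numeral n:]:]"
    by (simp add: numeral_poly)
  then show ?thesis using homog_const by metis
qed

lemma homog_X: "homog 1 X_var"
  by (simp add: homog_def X_var_def coeff_pCons split: nat.splits)

lemma homog_Y: "homog 1 Y_var"
  by (simp add: homog_def Y_var_def coeff_pCons split: nat.splits)

lemma homog_P32: "homog i (P32 i)"
proof -
  have L: "homog 1 (- 3 * X_var - 2 * Y_var)"
    using homog_diff[OF homog_mult'[OF homog_minus[OF homog_numeral] homog_X] homog_mult'[OF homog_numeral homog_Y]]
    by simp
  have p: "homog 1 p \<Longrightarrow> homog i (p ^ i)" for p using homog_power[of 1 p i] by simp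
  have c: "homog i p \<Longrightarrow> homog i (numeral n * p)" for p n
    using homog_mult'[OF homog_numeral, of i p i n] by simp
  show ?thesis unfolding P32_def
    by (intro homog_add c p L homog_X homog_Y)
qed

definition hcomp :: "nat \<Rightarrow> bipoly \<Rightarrow> bipoly" where
  "hcomp d p = (\<Sum>i\<le>d. monom (monom (coeff (coeff p i) (d - i)) (d - i)) i)"

lemma coeff_comp: "coeff (coeff (hcomp d p) i) j = (if i + j = d then coeff (coeff p i) j else 0)"
proof -
  have "coeff (coeff (hcomp d p) i) j = (\<Sum>k\<le>d. if k = i then (if d - k = j then coeff (coeff p k) (d - k) else 0) else 0)"
    unfolding hcomp_def coeff_sum by (intro sum.cong) auto
  also have "\<dots> = (if i + j = d then coeff (coeff p i) j else 0)"
    by (auto simp: sum.delta)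
  finally show ?thesis .
qed

lemma homog_comp: "homog d (hcomp d p)"
  unfolding homog_def coeff_comp by auto

lemma comp_homog: "homog e p \<Longrightarrow> hcomp d p = (if d = e then p else 0)"
  by (intro poly_eqI) (auto simp: coeff_comp homog_def)

lemma comp_self: "homog d p \<Longrightarrow> hcomp d p = p"
  using comp_homog by auto

lemma comp_add: "hcomp d (p + q) = hcomp d p + hcomp d q"
  by (intro poly_eqI) (simp add: coeff_comp)

lemma comp_cscale: "hcomp d (cscale c p) = cscale c (hcomp d p)"
  by (intro poly_eqI) (simp add: coeff_comp cscale_def)

lemma comp_0[simp]: "hcomp d 0 = 0"
  by (intro poly_eqI) (simp add: coeff_comp)

lemma comp_sum: "hcomp d (sum f A) = (\<Sum>a\<in>A. hcomp d (f a))"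
  by (induction A rule: infinite_finite_induct) (auto simp: comp_add)

lemma comp_cong:
  assumes "\<And>i. i \<le> d \<Longrightarrow> coeff (coeff p i) (d - i) = coeff (coeff q i) (d - i)"
  shows "hcomp d p = hcomp d q"
  unfolding hcomp_def using assms by (intro sum.cong) auto

lemma eval2_monom: "eval2 (monom (monom c k) i) 1 t = c * t ^ i"
  by (simp add: eval2_def poly_monom)

definition gpol :: "nat \<Rightarrow> bipoly \<Rightarrow> complex poly" where
  "gpol d p = (\<Sum>i\<le>d. monom (coeff (coeff p i) (d - i)) i)"

lemma eval2_comp: "eval2 (hcomp d p) 1 t = poly (gpol d p) t"
  by (simp add: hcomp_def gpol_def eval2_sum eval2_monom poly_sum poly_monom)

lemma coeff_gpol: "coeff (gpol d p) i = (if i \<le> d then coeff (coeff p i) (d - i) else 0)"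
  unfolding gpol_def coeff_sum by (auto simp: sum.delta)

lemma degree_gpol: "degree (gpol d p) \<le> d"
  by (rule degree_le) (simp add: coeff_gpol)

lemma homog_eq:
  assumes hp: "homog d p" and hq: "homog d q"
    and ev: "\<And>k. k \<le> d \<Longrightarrow> eval2 p 1 (of_nat k) = eval2 q 1 (of_nat k)"
  shows "p = q"
proof -
  let ?A = "(of_nat :: nat \<Rightarrow> complex) ` {0..d}"
  have cA: "card ?A = Suc d"
    by (subst card_image) (auto simp: inj_on_def)
  have "gpol d p = gpol d q"
  proof (rule poly_eqI_degree[of ?A])
    fix x assume "x \<in> ?A"
    then obtain k where "k \<le> d" "x = of_nat k" by auto
    then show "poly (gpol d p) x = poly (gpol d q) x"
      using ev[of k] comp_self[OF hp] comp_self[OF hq] eval2_comp[of d p] eval2_comp[of d q] by metis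
  next
    show "degree (gpol d p) < card ?A" "degree (gpol d q) < card ?A"
      using degree_gpol[of d p] degree_gpol[of d q] cA by auto
  qed
  then have "\<And>i. i \<le> d \<Longrightarrow> coeff (coeff p i) (d - i) = coeff (coeff q i) (d - i)"
    by (metis coeff_gpol)
  then have "hcomp d p = hcomp d q" by (rule comp_cong)
  then show ?thesis using comp_self[OF hp] comp_self[OF hq] by simp
qed

definition Nb :: "bipoly \<Rightarrow> nat" where
  "Nb p = degree p + (\<Sum>i\<le>degree p. degree (coeff p i))"

lemma coeff_big: assumes "Nb p < i + j" shows "coeff (coeff p i) j = 0"
proof (cases "i \<le> degree p")
  case True
  have "degree (coeff p i) \<le> (\<Sum>i\<le>degree p. degree (coeff p i))"
    using True by (intro member_le_sum) auto
  then have "degree (coeff p i) < j" using assms True unfolding Nb_def by linarith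
  then show ?thesis by (simp add: coeff_eq_0)
next
  case False
  then show ?thesis by (simp add: coeff_eq_0)
qed

lemma decomp: assumes "Nb p \<le> M" shows "p = (\<Sum>d\<le>M. hcomp d p)"
proof (intro poly_eqI)
  fix i j
  have "coeff (coeff (\<Sum>d\<le>M. hcomp d p) i) j = (\<Sum>d\<le>M. if d = i + j then coeff (coeff p i) j else 0)"
    unfolding coeff_sum coeff_comp by (intro sum.cong) auto
  also have "\<dots> = coeff (coeff p i) j"
    using coeff_big[of p i j] assms by (auto simp: sum.delta)
  finally show "coeff (coeff p i) j = coeff (coeff (\<Sum>d\<le>M. hcomp d p) i) j" by simp
qed

lemma comp_mult: "hcomp d (p * q) = (\<Sum>a\<le>d. hcomp a p * hcomp (d - a) q)"
proof -
  define M where "M = max (max (Nb p) (Nb q)) d"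
  have "p * q = (\<Sum>a\<le>M. hcomp a p) * (\<Sum>b\<le>M. hcomp b q)"
    using decomp[of p M] decomp[of q M] unfolding M_def by simp
  also have "\<dots> = (\<Sum>a\<le>M. \<Sum>b\<le>M. hcomp a p * hcomp b q)"
    by (rule sum_product)
  finally have "hcomp d (p * q) = (\<Sum>a\<le>M. \<Sum>b\<le>M. hcomp d (hcomp a p * hcomp b q))"
    by (simp add: comp_sum)
  also have "\<dots> = (\<Sum>a\<le>M. \<Sum>b\<le>M. if b = d - a \<and> a \<le> d then hcomp a p * hcomp (d - a) q else 0)"
  proof (intro sum.cong refl)
    fix a b
    have "homog (a + b) (hcomp a p * hcomp b q)" by (intro homog_mult homog_comp)
    then show "hcomp d (hcomp a p * hcomp b q) = (if b = d - a \<and> a \<le> d then hcomp a p * hcomp (d - a) q else 0)"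
      by (auto simp: comp_homog)
  qed
  also have "\<dots> = (\<Sum>a\<le>M. if a \<le> d then hcomp a p * hcomp (d - a) q else 0)"
    by (intro sum.cong refl) (auto simp: M_def sum.delta')
  also have "\<dots> = (\<Sum>a\<le>d. hcomp a p * hcomp (d - a) q)"
    by (subst sum.inter_filter[symmetric]) (auto intro!: sum.cong simp: M_def)
  finally show ?thesis .
qed

section \<open>P-monomials\<close>

inductive isMon :: "nat \<Rightarrow> bipoly \<Rightarrow> bool" where
  one: "isMon 0 1"
| step: "isMon a m \<Longrightarrow> 2 \<le> i \<Longrightarrow> isMon (a + i) (m * P32 i)"

definition Mon :: "nat \<Rightarrow> bipoly set" where "Mon d = {m. isMon d m}"

lemma Mon_P: "m \<in> Mon (d - i) \<Longrightarrow> 2 \<le> i \<Longrightarrow> i \<le> d \<Longrightarrow> m * P32 i \<in> Mon d"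
  unfolding Mon_def using isMon.step[of "d - i" m i] by simp

lemma Mon_P32: "2 \<le> i \<Longrightarrow> i = d \<Longrightarrow> P32 i \<in> Mon d"
  unfolding Mon_def using isMon.step[OF isMon.one, of i] by simp

lemma Mon_1: "1 \<in> Mon 0"
  unfolding Mon_def by (simp add: isMon.one)

lemma isMon_mult: "isMon b n \<Longrightarrow> isMon a m \<Longrightarrow> isMon (a + b) (m * n)"
proof (induction rule: isMon.induct)
  case one
  then show ?case by simp
next
  case (step b n i)
  then show ?case using isMon.step[of "a + b" "m * n" i] by (simp add: mult.assoc add.assoc)
qed

lemma Mon_mult: "m \<in> Mon a \<Longrightarrow> n \<in> Mon b \<Longrightarrow> m * n \<in> Mon (a + b)"
  unfolding Mon_def using isMon_mult by blast

lemma isMon_homog: "isMon d m \<Longrightarrow> homog d m"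
proof (induction rule: isMon.induct)
  case one
  then show ?case by (simp add: homog_def coeff_1)
next
  case (step a m i)
  then show ?case using homog_mult homog_P32 by blast
qed

lemma Mon_homog: "m \<in> Mon d \<Longrightarrow> homog d m"
  unfolding Mon_def using isMon_homog by blast

lemma span_homog: "x \<in> cs.span (Mon d) \<Longrightarrow> homog d x"
proof (induction rule: cs.span_induct_alt)
  case base
  then show ?case by simp
next
  case (step c x y)
  then show ?case using Mon_homog homog_add homog_cscale by blast
qed

lemma span_map:
  assumes "x \<in> cs.span S"
    and "\<And>s. s \<in> S \<Longrightarrow> f s \<in> cs.span T"
    and add: "\<And>a b. f (a + b) = f a + f b"
    and sc: "\<And>c a. f (cscale c a) = cscale c (f a)"
  shows "f x \<in> cs.span T"
  using assms(1)
proof (induction rule: cs.span_induct_alt)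
  case base
  have "f 0 = f 0 + f 0" using add[of 0 0] by simp
  then show ?case by (simp add: cs.span_zero)
next
  case (step c x y)
  then show ?case using assms(2) add sc by (simp add: cs.span_add cs.span_scale)
qed

lemma span_mult:
  assumes "x \<in> cs.span (Mon a)" "y \<in> cs.span (Mon b)"
  shows "x * y \<in> cs.span (Mon (a + b))"
proof -
  have inner: "s * y \<in> cs.span (Mon (a + b))" if s: "s \<in> Mon a" for s
  proof (rule span_map[where f = "\<lambda>y. s * y", OF assms(2)])
    fix t assume "t \<in> Mon b"
    then have "s * t \<in> Mon (a + b)" using Mon_mult[OF s] by blast
    then show "s * t \<in> cs.span (Mon (a + b))" by (rule cs.span_base)
  next
    show "s * (u + v) = s * u + s * v" for u v by (rule distrib_left)
    show "s * cscale c u = cscale c (s * u)" for c u unfolding cscale_def by (rule mult_smult_right)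
  qed
  show ?thesis
  proof (rule span_map[where f = "\<lambda>x. x * y", OF assms(1)])
    show "s * y \<in> cs.span (Mon (a + b))" if "s \<in> Mon a" for s using inner that .
    show "(u + v) * y = u * y + v * y" for u v by (rule distrib_right)
    show "cscale c u * y = cscale c (u * y)" for c u unfolding cscale_def by (rule mult_smult_left)
  qed
qed

lemma P32_1: "P32 1 = 0"
  by (simp add: P32_def)

lemma R32_P32: "P32 n \<in> R32"
proof -
  consider "n = 0" | "n = 1" | "2 \<le> n" by linarith
  then show ?thesis
  proof cases
    case 1
    have "P32 0 = 6" by (simp add: P32_def)
    also have "(6::bipoly) = [:[:6:]:]" by (simp add: numeral_poly)
    finally have "P32 0 = [:[:6:]:]" .
    then show ?thesis using 1 by (simp add: R32_def alg_gen.const)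
  next
    case 2
    have "P32 n = [:[:0:]:]" using 2 P32_1 by simp
    then show ?thesis by (metis R32_def alg_gen.const)
  next
    case 3
    then show ?thesis by (auto simp: R32_def intro: alg_gen.gen)
  qed
qed

lemma isMon_R: "isMon d m \<Longrightarrow> m \<in> R32"
proof (induction rule: isMon.induct)
  case one
  have "(1::bipoly) = [:[:1:]:]" by (metis one_pCons)
  then show ?case by (metis R32_def alg_gen.const)
next
  case (step a m i)
  then show ?case using R32_P32 by (simp add: R32_def alg_gen.mult)
qed

lemma Mon_R: "Mon d \<subseteq> R32"
  unfolding Mon_def using isMon_R by blast

lemma R_comp: "p \<in> R32 \<Longrightarrow> hcomp d p \<in> cs.span (Mon d)"
  unfolding R32_def
proof (induction arbitrary: d rule: alg_gen.induct)
  case (const c)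
  have h: "homog 0 [:[:c:]:]" by (rule homog_const)
  show ?case
  proof (cases "d = 0")
    case True
    have "[:[:c:]:] = cscale c 1" by (simp add: cscale_def)
    then show ?thesis using True comp_homog[OF h, of d] Mon_1 by (simp add: cs.span_scale cs.span_base)
  next
    case False
    then show ?thesis using comp_homog[OF h, of d] by (simp add: cs.span_zero)
  qed
next
  case (gen g)
  then obtain i where i: "2 \<le> i" "g = P32 i" by auto
  then show ?case using comp_homog[OF homog_P32, of d i] Mon_P32[of i d]
    by (auto simp: cs.span_zero cs.span_base)
next
  case (add a b)
  then show ?case by (simp add: comp_add cs.span_add)
next
  case (mult a b)
  show ?case unfolding comp_mult
  proof (intro cs.span_sum)
    fix k assume k: "k \<in> {..d}"
    have "hcomp k a * hcomp (d - k) b \<in> cs.span (Mon (k + (d - k)))"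
      using mult.IH by (intro span_mult) auto
    then show "hcomp k a * hcomp (d - k) b \<in> cs.span (Mon d)" using k by simp
  qed
qed

lemma graded_span: "cs.span (graded_piece R32 d) = cs.span (Mon d)"
proof -
  have "graded_piece R32 d \<subseteq> cs.span (Mon d)"
  proof
    fix p assume "p \<in> graded_piece R32 d"
    then have "p \<in> R32" "homog d p" unfolding graded_piece_def by auto
    then show "p \<in> cs.span (Mon d)" using R_comp[of p d] comp_self[of d p] by simp
  qed
  moreover have "Mon d \<subseteq> graded_piece R32 d"
    unfolding graded_piece_def using Mon_R Mon_homog by auto
  ultimately show ?thesis
  proof -
    assume a1: "graded_piece R32 d \<subseteq> cs.span (Mon d)" and a2: "Mon d \<subseteq> graded_piece R32 d"
    have "cs.span (graded_piece R32 d) \<subseteq> cs.span (cs.span (Mon d))" using a1 by (rule cs.span_mono)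
    then have "cs.span (graded_piece R32 d) \<subseteq> cs.span (Mon d)" by (simp add: cs.span_span)
    moreover have "cs.span (Mon d) \<subseteq> cs.span (graded_piece R32 d)" using a2 by (rule cs.span_mono)
    ultimately show ?thesis by blast
  qed
qed

lemma dim_graded: "cs.dim (graded_piece R32 d) = cs.dim (Mon d)"
  using graded_span cs.span_eq_dim by blast

lemma homog_eq':
  assumes hp: "homog d p" and hq: "homog d q" and A: "d < card A"
    and ev: "\<forall>t\<in>A. eval2 p 1 t = eval2 q 1 t"
  shows "p = q"
proof -
  have "gpol d p = gpol d q"
  proof (rule poly_eqI_degree[of A])
    fix x assume "x \<in> A"
    then show "poly (gpol d p) x = poly (gpol d q) x"
      using ev comp_self[OF hp] comp_self[OF hq] eval2_comp[of d p] eval2_comp[of d q] by metis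
  next
    show "degree (gpol d p) < card A" "degree (gpol d q) < card A"
      using degree_gpol[of d p] degree_gpol[of d q] A by auto
  qed
  then have "\<And>i. i \<le> d \<Longrightarrow> coeff (coeff p i) (d - i) = coeff (coeff q i) (d - i)"
    by (metis coeff_gpol)
  then have "hcomp d p = hcomp d q" by (rule comp_cong)
  then show ?thesis using comp_self[OF hp] comp_self[OF hq] by simp
qed

definition psi :: "(complex \<times> complex) list \<Rightarrow> bipoly \<Rightarrow> complex" where
  "psi a p = (\<Sum>(c, t)\<leftarrow>a. c * eval2 p 1 t)"

lemma psi_add: "psi a (x + y) = psi a x + psi a y"
  unfolding psi_def by (induction a) (auto simp: algebra_simps)

lemma psi_cscale: "psi a (cscale c x) = c * psi a x"
  unfolding psi_def by (induction a) (auto simp: algebra_simps)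

lemma psi_0: "psi a 0 = 0"
  unfolding psi_def by (induction a) auto

lemma psi_sum: "psi a (sum g A) = (\<Sum>y\<in>A. psi a (g y))"
  by (induction A rule: infinite_finite_induct) (auto simp: psi_0 psi_add)

lemma psi_span: "x \<in> cs.span S \<Longrightarrow> \<forall>s\<in>S. psi a s = 0 \<Longrightarrow> psi a x = 0"
  by (induction rule: cs.span_induct_alt) (auto simp: psi_0 psi_add psi_cscale)

lemma indep_dual:
  assumes len: "length as = length bs"
    and M: "map (\<lambda>a. map (\<lambda>b. psi a b = 0) bs) as = map (\<lambda>i. map (\<lambda>j. i \<noteq> j) [0..<length bs]) [0..<length bs]"
  shows "cs.independent (set bs) \<and> distinct bs"
proof -
  have P: "(psi (as ! i) (bs ! j) = 0) = (i \<noteq> j)" if "i < length bs" "j < length bs" for i j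
  proof -
    have "map (\<lambda>a. map (\<lambda>b. psi a b = 0) bs) as ! i ! j = map (\<lambda>i. map (\<lambda>j. i \<noteq> j) [0..<length bs]) [0..<length bs] ! i ! j"
      using M by simp
    then show ?thesis using that len by simp
  qed
  have dist: "distinct bs"
    unfolding distinct_conv_nth
  proof (intro allI impI)
    fix i j assume ij: "i < length bs" "j < length bs" "i \<noteq> j"
    show "bs ! i \<noteq> bs ! j"
    proof
      assume "bs ! i = bs ! j"
      then have "psi (as ! i) (bs ! i) = psi (as ! i) (bs ! j)" by simp
      then show False using P[of i i] P[of i j] ij by simp
    qed
  qed
  have "cs.independent (set bs)"
  proof (rule cs.independent_if_scalars_zero)
    show "finite (set bs)" by simp
  next
    fix f x
    assume sum: "(\<Sum>x\<in>set bs. cscale (f x) x) = 0" and x: "x \<in> set bs"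
    then obtain i where i: "i < length bs" "x = bs ! i" by (auto simp: in_set_conv_nth)
    have "0 = psi (as ! i) (\<Sum>x\<in>set bs. cscale (f x) x)" using sum psi_0 by simp
    also have "\<dots> = (\<Sum>y\<in>set bs. f y * psi (as ! i) y)" by (simp add: psi_sum psi_cscale)
    also have "\<dots> = f x * psi (as ! i) x"
    proof (rule sum.remove[OF _ x, THEN trans])
      show "finite (set bs)" by simp
      have "\<forall>y\<in>set bs - {x}. f y * psi (as ! i) y = 0"
      proof
        fix y assume y: "y \<in> set bs - {x}"
        then obtain j where j: "j < length bs" "y = bs ! j" by (auto simp: in_set_conv_nth)
        then have "j \<noteq> i" using y i by auto
        then show "f y * psi (as ! i) y = 0" using P[of i j] i j by simp
      qed
      then have "(\<Sum>y\<in>set bs - {x}. f y * psi (as ! i) y) = 0" by (intro sum.neutral) blast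
      then show "f x * psi (as ! i) x + (\<Sum>y\<in>set bs - {x}. f y * psi (as ! i) y) = f x * psi (as ! i) x"
        by simp
    qed
    finally show "f x = 0" using P[of i i] i by simp
  qed
  with dist show ?thesis by simp
qed

lemma span_homog_sum:
  assumes "set bs \<subseteq> Mon d"
  shows "(\<Sum>(c, b)\<leftarrow>zip cs bs. cscale c b) \<in> cs.span (set bs)"
  using assms
proof (induction cs bs rule: list_induct2')
  case (4 c cs b bs)
  then have "(\<Sum>(c, b)\<leftarrow>zip cs bs. cscale c b) \<in> cs.span (set (b # bs))"
    using cs.span_mono[of "set bs" "set (b # bs)"] by auto
  then show ?case by (simp add: cs.span_add cs.span_scale cs.span_base)
qed (auto simp: cs.span_zero)

lemma eval2_sum_zip:
  "eval2 (\<Sum>(c, b)\<leftarrow>zip cs bs. cscale c b) x y = (\<Sum>(c, b)\<leftarrow>zip cs bs. c * eval2 b x y)"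
  by (induction cs bs rule: list_induct2') auto

lemma rel_span:
  assumes bs: "set bs \<subseteq> Mon d" and x: "x \<in> Mon d" and k: "k \<noteq> 0" and A: "d < card A"
    and ev: "\<forall>t\<in>A. k * eval2 x 1 t = (\<Sum>(c, b)\<leftarrow>zip cs bs. c * eval2 b 1 t)"
  shows "x \<in> cs.span (set bs)"
proof -
  let ?y = "(\<Sum>(c, b)\<leftarrow>zip cs bs. cscale c b)"
  have y: "?y \<in> cs.span (set bs)" using span_homog_sum[OF bs] .
  have hy: "homog d ?y"
    using span_homog cs.span_mono[OF bs] y by blast
  have hx: "homog d (cscale k x)" using Mon_homog[OF x] homog_cscale by blast
  have "cscale k x = ?y"
    by (rule homog_eq'[OF hx hy A]) (use ev in \<open>simp add: eval2_sum_zip\<close>)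
  then have "cscale (1 / k) (cscale k x) = cscale (1 / k) ?y" by simp
  then have "x = cscale (1 / k) ?y" using k by simp
  then show ?thesis using y cs.span_scale by simp
qed

lemma span_times:
  assumes "m \<in> cs.span A" "\<forall>b\<in>A. b * p \<in> cs.span T"
  shows "m * p \<in> cs.span T"
  by (rule span_map[where f = "\<lambda>x. x * p", OF assms(1)])
     (use assms(2) in \<open>auto simp: distrib_right cscale_def mult_smult_left\<close>)

lemma Mon_cases':
  assumes "m \<in> Mon d"
  shows "(d = 0 \<and> m = 1) \<or> (\<exists>m' i. m = m' * P32 i \<and> m' \<in> Mon (d - i) \<and> 2 \<le> i \<and> i \<le> d)"
proof -
  have "isMon d m" using assms unfolding Mon_def by simp
  then show ?thesis
  proof (cases rule: isMon.cases)
    case one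
    then show ?thesis by simp
  next
    case (step a m' i)
    then have "m = m' * P32 i \<and> m' \<in> Mon (d - i) \<and> 2 \<le> i \<and> i \<le> d" unfolding Mon_def by auto
    then show ?thesis by blast
  qed
qed

lemma Mon_0: "Mon 0 = {1}"
proof -
  have "m \<in> Mon 0 \<Longrightarrow> m = 1" for m using Mon_cases'[of m 0] by auto
  then show ?thesis using Mon_1 by auto
qed

lemma Mon_step:
  assumes "d > 0"
    and "\<And>i m. 2 \<le> i \<Longrightarrow> i \<le> d \<Longrightarrow> m \<in> Mon (d - i) \<Longrightarrow> m * P32 i \<in> cs.span T"
  shows "Mon d \<subseteq> cs.span T"
  using assms Mon_cases' by blast

lemma Mon_1': "d = 0 \<Longrightarrow> 1 \<in> Mon d"
  using Mon_1 by simp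

definition B0 :: "bipoly list" where "B0 = [1]"

lemma B0_Mon: "set B0 \<subseteq> Mon 0"
  unfolding B0_def by (simp add: Mon_1)

lemma B0_indep: "cs.independent (set B0) \<and> distinct B0"
  by (rule indep_dual[where as = "[[(1, 0)]]"]) (simp_all add: B0_def psi_def)

lemma Mon0: "Mon 0 \<subseteq> cs.span (set B0)"
  by (simp add: Mon_0 B0_def cs.span_base)

lemma dim0: "cs.dim (Mon 0) = 1"
  using cs.dim_unique[OF B0_Mon Mon0] B0_indep distinct_card by (simp add: B0_def)

definition B1 :: "bipoly list" where "B1 = []"

lemma B1_Mon: "set B1 \<subseteq> Mon 1"
  unfolding B1_def by simp

lemma B1_indep: "cs.independent (set B1) \<and> distinct B1"
  by (rule indep_dual[where as = "[]"]) (simp_all add: B1_def psi_def)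

lemma Mon1: "Mon 1 \<subseteq> cs.span (set B1)"
  by (rule Mon_step) auto

lemma dim1: "cs.dim (Mon 1) = 0"
  using cs.dim_unique[OF B1_Mon Mon1] B1_indep distinct_card by (simp add: B1_def)

definition B2 :: "bipoly list" where "B2 = [P32 2]"

lemma B2_Mon: "set B2 \<subseteq> Mon 2"
  unfolding B2_def by (simp; intro conjI Mon_P Mon_P32; simp)

lemma B2_indep: "cs.independent (set B2) \<and> distinct B2"
  by (rule indep_dual[where as = "[[(1, 0)]]"]) (simp_all add: B2_def psi_def)

lemma S_2_2: "\<forall>b\<in>set B0. b * P32 2 \<in> cs.span (set B2)"
proof -
  have f0: "1 * P32 2 \<in> cs.span (set B2)"
    by (rule cs.span_base) (simp add: B2_def ac_simps)
  show ?thesis unfolding B0_def using f0 by simp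
qed

lemma Mon2: "Mon 2 \<subseteq> cs.span (set B2)"
proof (rule Mon_step)
  fix i m assume i: "2 \<le> i" "i \<le> 2" and m: "m \<in> Mon (2 - i)"
  then have "i = 2" by simp
  then show "m * P32 i \<in> cs.span (set B2)" using span_times[OF subsetD[OF Mon0] S_2_2] m by simp
qed simp

lemma dim2: "cs.dim (Mon 2) = 1"
  using cs.dim_unique[OF B2_Mon Mon2] B2_indep distinct_card by (simp add: B2_def)

definition B3 :: "bipoly list" where "B3 = [P32 3]"

lemma B3_Mon: "set B3 \<subseteq> Mon 3"
  unfolding B3_def by (simp; intro conjI Mon_P Mon_P32; simp)

lemma B3_indep: "cs.independent (set B3) \<and> distinct B3"
  by (rule indep_dual[where as = "[[(-1, 0)]]"]) (simp_all add: B3_def psi_def)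

lemma S_3_2: "\<forall>b\<in>set B1. b * P32 2 \<in> cs.span (set B3)"
proof -
  show ?thesis unfolding B1_def  by simp
qed

lemma S_3_3: "\<forall>b\<in>set B0. b * P32 3 \<in> cs.span (set B3)"
proof -
  have f0: "1 * P32 3 \<in> cs.span (set B3)"
    by (rule cs.span_base) (simp add: B3_def ac_simps)
  show ?thesis unfolding B0_def using f0 by simp
qed

lemma Mon3: "Mon 3 \<subseteq> cs.span (set B3)"
proof (rule Mon_step)
  fix i m assume i: "2 \<le> i" "i \<le> 3" and m: "m \<in> Mon (3 - i)"
  have "i = 2 \<or> i = 3" using i by presburger
  then show "m * P32 i \<in> cs.span (set B3)"
  proof (elim disjE)
    assume "i = 2"
    then show ?thesis using span_times[OF subsetD[OF Mon1] S_3_2] m by simp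
  next
    assume "i = 3"
    then show ?thesis using span_times[OF subsetD[OF Mon0] S_3_3] m by simp
  qed
qed simp

lemma dim3: "cs.dim (Mon 3) = 1"
  using cs.dim_unique[OF B3_Mon Mon3] B3_indep distinct_card by (simp add: B3_def)

definition B4 :: "bipoly list" where "B4 = [P32 2 * P32 2, P32 4]"

lemma B4_Mon: "set B4 \<subseteq> Mon 4"
  unfolding B4_def by (simp; intro conjI Mon_P Mon_P32; simp)

lemma B4_indep: "cs.independent (set B4) \<and> distinct B4"
  by (rule indep_dual[where as = "[[(15, 0), (-2, 1)], [(-25, 0), (4, 1)]]"]) (simp_all add: B4_def psi_def)

lemma S_4_2: "\<forall>b\<in>set B2. b * P32 2 \<in> cs.span (set B4)"
proof -
  have f0: "P32 2 * P32 2 \<in> cs.span (set B4)"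
    by (rule cs.span_base) (simp add: B4_def ac_simps)
  show ?thesis unfolding B2_def using f0 by simp
qed

lemma S_4_3: "\<forall>b\<in>set B1. b * P32 3 \<in> cs.span (set B4)"
proof -
  show ?thesis unfolding B1_def  by simp
qed

lemma S_4_4: "\<forall>b\<in>set B0. b * P32 4 \<in> cs.span (set B4)"
proof -
  have f0: "1 * P32 4 \<in> cs.span (set B4)"
    by (rule cs.span_base) (simp add: B4_def ac_simps)
  show ?thesis unfolding B0_def using f0 by simp
qed

lemma Mon4: "Mon 4 \<subseteq> cs.span (set B4)"
proof (rule Mon_step)
  fix i m assume i: "2 \<le> i" "i \<le> 4" and m: "m \<in> Mon (4 - i)"
  have "i = 2 \<or> i = 3 \<or> i = 4" using i by presburger
  then show "m * P32 i \<in> cs.span (set B4)"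
  proof (elim disjE)
    assume "i = 2"
    then show ?thesis using span_times[OF subsetD[OF Mon2] S_4_2] m by simp
  next
    assume "i = 3"
    then show ?thesis using span_times[OF subsetD[OF Mon1] S_4_3] m by simp
  next
    assume "i = 4"
    then show ?thesis using span_times[OF subsetD[OF Mon0] S_4_4] m by simp
  qed
qed simp

lemma dim4: "cs.dim (Mon 4) = 2"
  using cs.dim_unique[OF B4_Mon Mon4] B4_indep distinct_card by (simp add: B4_def)

definition B5 :: "bipoly list" where "B5 = [P32 2 * P32 3, P32 5]"

lemma B5_Mon: "set B5 \<subseteq> Mon 5"
  unfolding B5_def by (simp; intro conjI Mon_P Mon_P32; simp)

lemma B5_indep: "cs.independent (set B5) \<and> distinct B5"
  by (rule indep_dual[where as = "[[(-13, 0), (1, 1)], [(25, 0), (-2, 1)]]"]) (simp_all add: B5_def psi_def)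

lemma S_5_2: "\<forall>b\<in>set B3. b * P32 2 \<in> cs.span (set B5)"
proof -
  have f0: "P32 3 * P32 2 \<in> cs.span (set B5)"
    by (rule cs.span_base) (simp add: B5_def ac_simps)
  show ?thesis unfolding B3_def using f0 by simp
qed

lemma S_5_3: "\<forall>b\<in>set B2. b * P32 3 \<in> cs.span (set B5)"
proof -
  have f0: "P32 2 * P32 3 \<in> cs.span (set B5)"
    by (rule cs.span_base) (simp add: B5_def ac_simps)
  show ?thesis unfolding B2_def using f0 by simp
qed

lemma S_5_4: "\<forall>b\<in>set B1. b * P32 4 \<in> cs.span (set B5)"
proof -
  show ?thesis unfolding B1_def  by simp
qed

lemma S_5_5: "\<forall>b\<in>set B0. b * P32 5 \<in> cs.span (set B5)"
proof -
  have f0: "1 * P32 5 \<in> cs.span (set B5)"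
    by (rule cs.span_base) (simp add: B5_def ac_simps)
  show ?thesis unfolding B0_def using f0 by simp
qed

lemma Mon5: "Mon 5 \<subseteq> cs.span (set B5)"
proof (rule Mon_step)
  fix i m assume i: "2 \<le> i" "i \<le> 5" and m: "m \<in> Mon (5 - i)"
  have "i = 2 \<or> i = 3 \<or> i = 4 \<or> i = 5" using i by presburger
  then show "m * P32 i \<in> cs.span (set B5)"
  proof (elim disjE)
    assume "i = 2"
    then show ?thesis using span_times[OF subsetD[OF Mon3] S_5_2] m by simp
  next
    assume "i = 3"
    then show ?thesis using span_times[OF subsetD[OF Mon2] S_5_3] m by simp
  next
    assume "i = 4"
    then show ?thesis using span_times[OF subsetD[OF Mon1] S_5_4] m by simp
  next
    assume "i = 5"
    then show ?thesis using span_times[OF subsetD[OF Mon0] S_5_5] m by simp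
  qed
qed simp

lemma dim5: "cs.dim (Mon 5) = 2"
  using cs.dim_unique[OF B5_Mon Mon5] B5_indep distinct_card by (simp add: B5_def)

definition B6 :: "bipoly list" where "B6 = [P32 2 * P32 2 * P32 2, P32 2 * P32 4, P32 3 * P32 3, P32 6]"

lemma B6_Mon: "set B6 \<subseteq> Mon 6"
  unfolding B6_def by (simp; intro conjI Mon_P Mon_P32; simp)

lemma B6_indep: "cs.independent (set B6) \<and> distinct B6"
  by (rule indep_dual[where as = "[[(-3260, 0), (276863, 1), (-61900, 2), (5565, 3)], [(28004, 0), (-164367, 1), (36972, 2), (-3389, 3)], [(14230, 0), (-37287, 1), (8502, 2), (-805, 3)], [(-24800, 0), (91527, 1), (-20700, 2), (1925, 3)]]"]) (simp_all add: B6_def psi_def)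

lemma S_6_2: "\<forall>b\<in>set B4. b * P32 2 \<in> cs.span (set B6)"
proof -
  have f0: "P32 2 * P32 2 * P32 2 \<in> cs.span (set B6)"
    by (rule cs.span_base) (simp add: B6_def ac_simps)
  have f1: "P32 4 * P32 2 \<in> cs.span (set B6)"
    by (rule cs.span_base) (simp add: B6_def ac_simps)
  show ?thesis unfolding B4_def using f0 f1 by simp
qed

lemma S_6_3: "\<forall>b\<in>set B3. b * P32 3 \<in> cs.span (set B6)"
proof -
  have f0: "P32 3 * P32 3 \<in> cs.span (set B6)"
    by (rule cs.span_base) (simp add: B6_def ac_simps)
  show ?thesis unfolding B3_def using f0 by simp
qed

lemma S_6_4: "\<forall>b\<in>set B2. b * P32 4 \<in> cs.span (set B6)"
proof -
  have f0: "P32 2 * P32 4 \<in> cs.span (set B6)"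
    by (rule cs.span_base) (simp add: B6_def ac_simps)
  show ?thesis unfolding B2_def using f0 by simp
qed

lemma S_6_5: "\<forall>b\<in>set B1. b * P32 5 \<in> cs.span (set B6)"
proof -
  show ?thesis unfolding B1_def  by simp
qed

lemma S_6_6: "\<forall>b\<in>set B0. b * P32 6 \<in> cs.span (set B6)"
proof -
  have f0: "1 * P32 6 \<in> cs.span (set B6)"
    by (rule cs.span_base) (simp add: B6_def ac_simps)
  show ?thesis unfolding B0_def using f0 by simp
qed

lemma Mon6: "Mon 6 \<subseteq> cs.span (set B6)"
proof (rule Mon_step)
  fix i m assume i: "2 \<le> i" "i \<le> 6" and m: "m \<in> Mon (6 - i)"
  have "i = 2 \<or> i = 3 \<or> i = 4 \<or> i = 5 \<or> i = 6" using i by presburger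
  then show "m * P32 i \<in> cs.span (set B6)"
  proof (elim disjE)
    assume "i = 2"
    then show ?thesis using span_times[OF subsetD[OF Mon4] S_6_2] m by simp
  next
    assume "i = 3"
    then show ?thesis using span_times[OF subsetD[OF Mon3] S_6_3] m by simp
  next
    assume "i = 4"
    then show ?thesis using span_times[OF subsetD[OF Mon2] S_6_4] m by simp
  next
    assume "i = 5"
    then show ?thesis using span_times[OF subsetD[OF Mon1] S_6_5] m by simp
  next
    assume "i = 6"
    then show ?thesis using span_times[OF subsetD[OF Mon0] S_6_6] m by simp
  qed
qed simp

lemma dim6: "cs.dim (Mon 6) = 4"
  using cs.dim_unique[OF B6_Mon Mon6] B6_indep distinct_card by (simp add: B6_def)

definition B7 :: "bipoly list" where "B7 = [P32 2 * P32 2 * P32 3, P32 2 * P32 5, P32 3 * P32 4]"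

lemma B7_Mon: "set B7 \<subseteq> Mon 7"
  unfolding B7_def by (simp; intro conjI Mon_P Mon_P32; simp)

lemma B7_indep: "cs.independent (set B7) \<and> distinct B7"
  by (rule indep_dual[where as = "[[(-2835, 0), (-342, 1), (40, 2)], [(3375, 0), (432, 1), (-50, 2)], [(-225, 0), (-36, 1), (4, 2)]]"]) (simp_all add: B7_def psi_def)

lemma S_7_2: "\<forall>b\<in>set B5. b * P32 2 \<in> cs.span (set B7)"
proof -
  have f0: "P32 2 * P32 3 * P32 2 \<in> cs.span (set B7)"
    by (rule cs.span_base) (simp add: B7_def ac_simps)
  have f1: "P32 5 * P32 2 \<in> cs.span (set B7)"
    by (rule cs.span_base) (simp add: B7_def ac_simps)
  show ?thesis unfolding B5_def using f0 f1 by simp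
qed

lemma S_7_3: "\<forall>b\<in>set B4. b * P32 3 \<in> cs.span (set B7)"
proof -
  have f0: "P32 2 * P32 2 * P32 3 \<in> cs.span (set B7)"
    by (rule cs.span_base) (simp add: B7_def ac_simps)
  have f1: "P32 4 * P32 3 \<in> cs.span (set B7)"
    by (rule cs.span_base) (simp add: B7_def ac_simps)
  show ?thesis unfolding B4_def using f0 f1 by simp
qed

lemma S_7_4: "\<forall>b\<in>set B3. b * P32 4 \<in> cs.span (set B7)"
proof -
  have f0: "P32 3 * P32 4 \<in> cs.span (set B7)"
    by (rule cs.span_base) (simp add: B7_def ac_simps)
  show ?thesis unfolding B3_def using f0 by simp
qed

lemma S_7_5: "\<forall>b\<in>set B2. b * P32 5 \<in> cs.span (set B7)"
proof -
  have f0: "P32 2 * P32 5 \<in> cs.span (set B7)"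
    by (rule cs.span_base) (simp add: B7_def ac_simps)
  show ?thesis unfolding B2_def using f0 by simp
qed

lemma S_7_6: "\<forall>b\<in>set B1. b * P32 6 \<in> cs.span (set B7)"
proof -
  show ?thesis unfolding B1_def  by simp
qed

lemma S_7_7: "\<forall>b\<in>set B0. b * P32 7 \<in> cs.span (set B7)"
proof -
  have f0: "1 * P32 7 \<in> cs.span (set B7)"
    apply (rule rel_span[where d = 7 and k = 120 and cs = "[(-35), 84, 70]" and A = "{0,1,2,3,4,5,6,7}"])
    apply (rule B7_Mon)
    apply (intro Mon_P Mon_P32 Mon_1'; simp)
    apply simp
    apply simp
    apply (simp add: B7_def)
    done
  show ?thesis unfolding B0_def using f0 by simp
qed

lemma Mon7: "Mon 7 \<subseteq> cs.span (set B7)"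
proof (rule Mon_step)
  fix i m assume i: "2 \<le> i" "i \<le> 7" and m: "m \<in> Mon (7 - i)"
  have "i = 2 \<or> i = 3 \<or> i = 4 \<or> i = 5 \<or> i = 6 \<or> i = 7" using i by presburger
  then show "m * P32 i \<in> cs.span (set B7)"
  proof (elim disjE)
    assume "i = 2"
    then show ?thesis using span_times[OF subsetD[OF Mon5] S_7_2] m by simp
  next
    assume "i = 3"
    then show ?thesis using span_times[OF subsetD[OF Mon4] S_7_3] m by simp
  next
    assume "i = 4"
    then show ?thesis using span_times[OF subsetD[OF Mon3] S_7_4] m by simp
  next
    assume "i = 5"
    then show ?thesis using span_times[OF subsetD[OF Mon2] S_7_5] m by simp
  next
    assume "i = 6"
    then show ?thesis using span_times[OF subsetD[OF Mon1] S_7_6] m by simp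
  next
    assume "i = 7"
    then show ?thesis using span_times[OF subsetD[OF Mon0] S_7_7] m by simp
  qed
qed simp

lemma dim7: "cs.dim (Mon 7) = 3"
  using cs.dim_unique[OF B7_Mon Mon7] B7_indep distinct_card by (simp add: B7_def)

definition B8 :: "bipoly list" where "B8 = [P32 2 * P32 2 * P32 2 * P32 2, P32 2 * P32 2 * P32 4, P32 2 * P32 3 * P32 3, P32 2 * P32 6, P32 3 * P32 5, P32 4 * P32 4]"

lemma B8_Mon: "set B8 \<subseteq> Mon 8"
  unfolding B8_def by (simp; intro conjI Mon_P Mon_P32; simp)

lemma B8_indep: "cs.independent (set B8) \<and> distinct B8"
  by (rule indep_dual[where as = "[[(488306601, 0), (627575546, 1), (-109513360, 2), (16560810, 3), (-1968785, 4), (112924, 5)], [(-462645747, 0), (-548845016, 1), (89355760, 2), (-11400030, 3), (971075, 4), (-18538, 5)], [(-182691648, 0), (575115347, 1), (-172185760, 2), (48874140, 3), (-9850400, 4), (952273, 5)], [(190307142, 0), (124017629, 1), (-10281760, 2), (-2118060, 3), (910330, 4), (-115697, 5)], [(-15452955, 0), (-77158349, 1), (18104500, 2), (-4202100, 3), (757175, 4), (-68095, 5)], [(8239950, 0), (114046111, 1), (-27739040, 2), (6700500, 3), (-1241950, 4), (114125, 5)]]"]) (simp_all add: B8_def psi_def)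

lemma S_8_2: "\<forall>b\<in>set B6. b * P32 2 \<in> cs.span (set B8)"
proof -
  have f0: "P32 2 * P32 2 * P32 2 * P32 2 \<in> cs.span (set B8)"
    by (rule cs.span_base) (simp add: B8_def ac_simps)
  have f1: "P32 2 * P32 4 * P32 2 \<in> cs.span (set B8)"
    by (rule cs.span_base) (simp add: B8_def ac_simps)
  have f2: "P32 3 * P32 3 * P32 2 \<in> cs.span (set B8)"
    by (rule cs.span_base) (simp add: B8_def ac_simps)
  have f3: "P32 6 * P32 2 \<in> cs.span (set B8)"
    by (rule cs.span_base) (simp add: B8_def ac_simps)
  show ?thesis unfolding B6_def using f0 f1 f2 f3 by simp
qed

lemma S_8_3: "\<forall>b\<in>set B5. b * P32 3 \<in> cs.span (set B8)"
proof -
  have f0: "P32 2 * P32 3 * P32 3 \<in> cs.span (set B8)"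
    by (rule cs.span_base) (simp add: B8_def ac_simps)
  have f1: "P32 5 * P32 3 \<in> cs.span (set B8)"
    by (rule cs.span_base) (simp add: B8_def ac_simps)
  show ?thesis unfolding B5_def using f0 f1 by simp
qed

lemma S_8_4: "\<forall>b\<in>set B4. b * P32 4 \<in> cs.span (set B8)"
proof -
  have f0: "P32 2 * P32 2 * P32 4 \<in> cs.span (set B8)"
    by (rule cs.span_base) (simp add: B8_def ac_simps)
  have f1: "P32 4 * P32 4 \<in> cs.span (set B8)"
    by (rule cs.span_base) (simp add: B8_def ac_simps)
  show ?thesis unfolding B4_def using f0 f1 by simp
qed

lemma S_8_5: "\<forall>b\<in>set B3. b * P32 5 \<in> cs.span (set B8)"
proof -
  have f0: "P32 3 * P32 5 \<in> cs.span (set B8)"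
    by (rule cs.span_base) (simp add: B8_def ac_simps)
  show ?thesis unfolding B3_def using f0 by simp
qed

lemma S_8_6: "\<forall>b\<in>set B2. b * P32 6 \<in> cs.span (set B8)"
proof -
  have f0: "P32 2 * P32 6 \<in> cs.span (set B8)"
    by (rule cs.span_base) (simp add: B8_def ac_simps)
  show ?thesis unfolding B2_def using f0 by simp
qed

lemma S_8_7: "\<forall>b\<in>set B1. b * P32 7 \<in> cs.span (set B8)"
proof -
  show ?thesis unfolding B1_def  by simp
qed

lemma S_8_8: "\<forall>b\<in>set B0. b * P32 8 \<in> cs.span (set B8)"
proof -
  have f0: "1 * P32 8 \<in> cs.span (set B8)"
    apply (rule rel_span[where d = 8 and k = 720 and cs = "[15, (-180), (-160), 480, 384, 180]" and A = "{0,1,2,3,4,5,6,7,8}"])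
    apply (rule B8_Mon)
    apply (intro Mon_P Mon_P32 Mon_1'; simp)
    apply simp
    apply simp
    apply (simp add: B8_def)
    done
  show ?thesis unfolding B0_def using f0 by simp
qed

lemma Mon8: "Mon 8 \<subseteq> cs.span (set B8)"
proof (rule Mon_step)
  fix i m assume i: "2 \<le> i" "i \<le> 8" and m: "m \<in> Mon (8 - i)"
  have "i = 2 \<or> i = 3 \<or> i = 4 \<or> i = 5 \<or> i = 6 \<or> i = 7 \<or> i = 8" using i by presburger
  then show "m * P32 i \<in> cs.span (set B8)"
  proof (elim disjE)
    assume "i = 2"
    then show ?thesis using span_times[OF subsetD[OF Mon6] S_8_2] m by simp
  next
    assume "i = 3"
    then show ?thesis using span_times[OF subsetD[OF Mon5] S_8_3] m by simp
  next
    assume "i = 4"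
    then show ?thesis using span_times[OF subsetD[OF Mon4] S_8_4] m by simp
  next
    assume "i = 5"
    then show ?thesis using span_times[OF subsetD[OF Mon3] S_8_5] m by simp
  next
    assume "i = 6"
    then show ?thesis using span_times[OF subsetD[OF Mon2] S_8_6] m by simp
  next
    assume "i = 7"
    then show ?thesis using span_times[OF subsetD[OF Mon1] S_8_7] m by simp
  next
    assume "i = 8"
    then show ?thesis using span_times[OF subsetD[OF Mon0] S_8_8] m by simp
  qed
qed simp

lemma dim8: "cs.dim (Mon 8) = 6"
  using cs.dim_unique[OF B8_Mon Mon8] B8_indep distinct_card by (simp add: B8_def)

definition B9 :: "bipoly list" where "B9 = [P32 2 * P32 2 * P32 2 * P32 3, P32 2 * P32 2 * P32 5, P32 2 * P32 3 * P32 4, P32 3 * P32 3 * P32 3, P32 3 * P32 6, P32 4 * P32 5]"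

lemma B9_Mon: "set B9 \<subseteq> Mon 9"
  unfolding B9_def by (simp; intro conjI Mon_P Mon_P32; simp)

lemma B9_indep: "cs.independent (set B9) \<and> distinct B9"
  by (rule indep_dual[where as = "[[(-20777040, 0), (184227735, 1), (-39584800, 2), (8793225, 3), (-1457904, 4), (119665, 5)], [(-42427728, 0), (-65202113, 1), (10927520, 2), (-1989945, 3), (297056, 4), (-22847, 5)], [(114305328, 0), (147538571, 1), (-23046560, 2), (3892005, 3), (-553136, 4), (41117, 5)], [(34002720, 0), (45546011, 1), (-7189440, 2), (1225125, 3), (-174752, 4), (13005, 5)], [(-88984080, 0), (-116785715, 1), (18500000, 2), (-3167325, 3), (453488, 4), (-33845, 5)], [(6431040, 0), (8492383, 1), (-1400800, 2), (249975, 3), (-36712, 4), (2785, 5)]]"]) (simp_all add: B9_def psi_def)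

lemma S_9_2: "\<forall>b\<in>set B7. b * P32 2 \<in> cs.span (set B9)"
proof -
  have f0: "P32 2 * P32 2 * P32 3 * P32 2 \<in> cs.span (set B9)"
    by (rule cs.span_base) (simp add: B9_def ac_simps)
  have f1: "P32 2 * P32 5 * P32 2 \<in> cs.span (set B9)"
    by (rule cs.span_base) (simp add: B9_def ac_simps)
  have f2: "P32 3 * P32 4 * P32 2 \<in> cs.span (set B9)"
    by (rule cs.span_base) (simp add: B9_def ac_simps)
  show ?thesis unfolding B7_def using f0 f1 f2 by simp
qed

lemma S_9_3: "\<forall>b\<in>set B6. b * P32 3 \<in> cs.span (set B9)"
proof -
  have f0: "P32 2 * P32 2 * P32 2 * P32 3 \<in> cs.span (set B9)"
    by (rule cs.span_base) (simp add: B9_def ac_simps)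
  have f1: "P32 2 * P32 4 * P32 3 \<in> cs.span (set B9)"
    by (rule cs.span_base) (simp add: B9_def ac_simps)
  have f2: "P32 3 * P32 3 * P32 3 \<in> cs.span (set B9)"
    by (rule cs.span_base) (simp add: B9_def ac_simps)
  have f3: "P32 6 * P32 3 \<in> cs.span (set B9)"
    by (rule cs.span_base) (simp add: B9_def ac_simps)
  show ?thesis unfolding B6_def using f0 f1 f2 f3 by simp
qed

lemma S_9_4: "\<forall>b\<in>set B5. b * P32 4 \<in> cs.span (set B9)"
proof -
  have f0: "P32 2 * P32 3 * P32 4 \<in> cs.span (set B9)"
    by (rule cs.span_base) (simp add: B9_def ac_simps)
  have f1: "P32 5 * P32 4 \<in> cs.span (set B9)"
    by (rule cs.span_base) (simp add: B9_def ac_simps)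
  show ?thesis unfolding B5_def using f0 f1 by simp
qed

lemma S_9_5: "\<forall>b\<in>set B4. b * P32 5 \<in> cs.span (set B9)"
proof -
  have f0: "P32 2 * P32 2 * P32 5 \<in> cs.span (set B9)"
    by (rule cs.span_base) (simp add: B9_def ac_simps)
  have f1: "P32 4 * P32 5 \<in> cs.span (set B9)"
    by (rule cs.span_base) (simp add: B9_def ac_simps)
  show ?thesis unfolding B4_def using f0 f1 by simp
qed

lemma S_9_6: "\<forall>b\<in>set B3. b * P32 6 \<in> cs.span (set B9)"
proof -
  have f0: "P32 3 * P32 6 \<in> cs.span (set B9)"
    by (rule cs.span_base) (simp add: B9_def ac_simps)
  show ?thesis unfolding B3_def using f0 by simp
qed

lemma S_9_7: "\<forall>b\<in>set B2. b * P32 7 \<in> cs.span (set B9)"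
proof -
  have f0: "P32 2 * P32 7 \<in> cs.span (set B9)"
    apply (rule rel_span[where d = 9 and k = 120 and cs = "[(-35), 84, 70, 0, 0, 0]" and A = "{0,1,2,3,4,5,6,7,8,9}"])
    apply (rule B9_Mon)
    apply (intro Mon_P Mon_P32 Mon_1'; simp)
    apply simp
    apply simp
    apply (simp add: B9_def)
    done
  show ?thesis unfolding B2_def using f0 by simp
qed

lemma S_9_8: "\<forall>b\<in>set B1. b * P32 8 \<in> cs.span (set B9)"
proof -
  show ?thesis unfolding B1_def  by simp
qed

lemma S_9_9: "\<forall>b\<in>set B0. b * P32 9 \<in> cs.span (set B9)"
proof -
  have f0: "1 * P32 9 \<in> cs.span (set B9)"
    apply (rule rel_span[where d = 9 and k = 360 and cs = "[(-45), 81, 0, (-20), 180, 162]" and A = "{0,1,2,3,4,5,6,7,8,9}"])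
    apply (rule B9_Mon)
    apply (intro Mon_P Mon_P32 Mon_1'; simp)
    apply simp
    apply simp
    apply (simp add: B9_def)
    done
  show ?thesis unfolding B0_def using f0 by simp
qed

lemma Mon9: "Mon 9 \<subseteq> cs.span (set B9)"
proof (rule Mon_step)
  fix i m assume i: "2 \<le> i" "i \<le> 9" and m: "m \<in> Mon (9 - i)"
  have "i = 2 \<or> i = 3 \<or> i = 4 \<or> i = 5 \<or> i = 6 \<or> i = 7 \<or> i = 8 \<or> i = 9" using i by presburger
  then show "m * P32 i \<in> cs.span (set B9)"
  proof (elim disjE)
    assume "i = 2"
    then show ?thesis using span_times[OF subsetD[OF Mon7] S_9_2] m by simp
  next
    assume "i = 3"
    then show ?thesis using span_times[OF subsetD[OF Mon6] S_9_3] m by simp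
  next
    assume "i = 4"
    then show ?thesis using span_times[OF subsetD[OF Mon5] S_9_4] m by simp
  next
    assume "i = 5"
    then show ?thesis using span_times[OF subsetD[OF Mon4] S_9_5] m by simp
  next
    assume "i = 6"
    then show ?thesis using span_times[OF subsetD[OF Mon3] S_9_6] m by simp
  next
    assume "i = 7"
    then show ?thesis using span_times[OF subsetD[OF Mon2] S_9_7] m by simp
  next
    assume "i = 8"
    then show ?thesis using span_times[OF subsetD[OF Mon1] S_9_8] m by simp
  next
    assume "i = 9"
    then show ?thesis using span_times[OF subsetD[OF Mon0] S_9_9] m by simp
  qed
qed simp

lemma dim9: "cs.dim (Mon 9) = 6"
  using cs.dim_unique[OF B9_Mon Mon9] B9_indep distinct_card by (simp add: B9_def)

definition B10 :: "bipoly list" where "B10 = [P32 2 * P32 2 * P32 2 * P32 2 * P32 2, P32 2 * P32 2 * P32 2 * P32 4, P32 2 * P32 2 * P32 3 * P32 3, P32 2 * P32 2 * P32 6, P32 2 * P32 3 * P32 5, P32 2 * P32 4 * P32 4, P32 3 * P32 3 * P32 4, P32 4 * P32 6]"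

lemma B10_Mon: "set B10 \<subseteq> Mon 10"
  unfolding B10_def by (simp; intro conjI Mon_P Mon_P32; simp)

lemma B10_indep: "cs.independent (set B10) \<and> distinct B10"
  by (rule indep_dual[where as = "[[(1444640622240, 0), (6770596206491, 1), (-1591196458190, 2), (575331482775, 3), (-198842877800, 4), (52093315085, 5), (-8773888578, 6), (700718865, 7)], [(-154347218089560, 0), (-781964496404777, 1), (185661478547580, 2), (-67593319364025, 3), (23443608937000, 4), (-6154771646415, 5), (1038077324676, 6), (-82987827455, 7)], [(-1650011904360, 0), (3390153258791, 1), (-1626371362470, 2), (877180703175, 3), (-374370556000, 4), (112014115185, 5), (-20684862954, 6), (1767815345, 7)], [(13961508039540, 0), (64865667879922, 1), (-15186850996695, 2), (5457814100550, 3), (-1875385143800, 4), (488833949310, 5), (-81976321665, 6), (6522756970, 7)], [(-27718924691700, 0), (-187919953107229, 1), (48065450291250, 2), (-18676455989625, 3), (6762129531500, 4), (-1830204015675, 5), (315776449422, 6), (-25692241375, 7)], [(42953261133600, 0), (309569671416257, 1), (-76523167886970, 2), (28700575210125, 3), (-10132039267000, 4), (2692582814775, 5), (-458270592822, 6), (36896450795, 7)], [(136313456760, 0), (987723894521, 1), (-246188546058, 2), (92814137325, 3), (-32839366000, 4), (8735960415, 5), (-1487515302, 6), (119784107, 7)], [(-595679058000, 0), (-4260421785685, 1), (1049749437750, 2), (-391699400625, 3), (137649635000, 4), (-36443983875, 5), (6183940698, 6), (-496654375, 7)]]"]) (simp_all add: B10_def psi_def)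

lemma S_10_2: "\<forall>b\<in>set B8. b * P32 2 \<in> cs.span (set B10)"
proof -
  have f0: "P32 2 * P32 2 * P32 2 * P32 2 * P32 2 \<in> cs.span (set B10)"
    by (rule cs.span_base) (simp add: B10_def ac_simps)
  have f1: "P32 2 * P32 2 * P32 4 * P32 2 \<in> cs.span (set B10)"
    by (rule cs.span_base) (simp add: B10_def ac_simps)
  have f2: "P32 2 * P32 3 * P32 3 * P32 2 \<in> cs.span (set B10)"
    by (rule cs.span_base) (simp add: B10_def ac_simps)
  have f3: "P32 2 * P32 6 * P32 2 \<in> cs.span (set B10)"
    by (rule cs.span_base) (simp add: B10_def ac_simps)
  have f4: "P32 3 * P32 5 * P32 2 \<in> cs.span (set B10)"
    by (rule cs.span_base) (simp add: B10_def ac_simps)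
  have f5: "P32 4 * P32 4 * P32 2 \<in> cs.span (set B10)"
    by (rule cs.span_base) (simp add: B10_def ac_simps)
  show ?thesis unfolding B8_def using f0 f1 f2 f3 f4 f5 by simp
qed

lemma S_10_3: "\<forall>b\<in>set B7. b * P32 3 \<in> cs.span (set B10)"
proof -
  have f0: "P32 2 * P32 2 * P32 3 * P32 3 \<in> cs.span (set B10)"
    by (rule cs.span_base) (simp add: B10_def ac_simps)
  have f1: "P32 2 * P32 5 * P32 3 \<in> cs.span (set B10)"
    by (rule cs.span_base) (simp add: B10_def ac_simps)
  have f2: "P32 3 * P32 4 * P32 3 \<in> cs.span (set B10)"
    by (rule cs.span_base) (simp add: B10_def ac_simps)
  show ?thesis unfolding B7_def using f0 f1 f2 by simp
qed

lemma S_10_4: "\<forall>b\<in>set B6. b * P32 4 \<in> cs.span (set B10)"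
proof -
  have f0: "P32 2 * P32 2 * P32 2 * P32 4 \<in> cs.span (set B10)"
    by (rule cs.span_base) (simp add: B10_def ac_simps)
  have f1: "P32 2 * P32 4 * P32 4 \<in> cs.span (set B10)"
    by (rule cs.span_base) (simp add: B10_def ac_simps)
  have f2: "P32 3 * P32 3 * P32 4 \<in> cs.span (set B10)"
    by (rule cs.span_base) (simp add: B10_def ac_simps)
  have f3: "P32 6 * P32 4 \<in> cs.span (set B10)"
    by (rule cs.span_base) (simp add: B10_def ac_simps)
  show ?thesis unfolding B6_def using f0 f1 f2 f3 by simp
qed

lemma S_10_5: "\<forall>b\<in>set B5. b * P32 5 \<in> cs.span (set B10)"
proof -
  have f0: "P32 2 * P32 3 * P32 5 \<in> cs.span (set B10)"
    by (rule cs.span_base) (simp add: B10_def ac_simps)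
  have f1: "P32 5 * P32 5 \<in> cs.span (set B10)"
    apply (rule rel_span[where d = 10 and k = 1440 and cs = "[(-5), 80, (-320), (-120), 1344, (-300), 0, 720]" and A = "{0,1,2,3,4,5,6,7,8,9,10}"])
    apply (rule B10_Mon)
    apply (intro Mon_P Mon_P32 Mon_1'; simp)
    apply simp
    apply simp
    apply (simp add: B10_def)
    done
  show ?thesis unfolding B5_def using f0 f1 by simp
qed

lemma S_10_6: "\<forall>b\<in>set B4. b * P32 6 \<in> cs.span (set B10)"
proof -
  have f0: "P32 2 * P32 2 * P32 6 \<in> cs.span (set B10)"
    by (rule cs.span_base) (simp add: B10_def ac_simps)
  have f1: "P32 4 * P32 6 \<in> cs.span (set B10)"
    by (rule cs.span_base) (simp add: B10_def ac_simps)
  show ?thesis unfolding B4_def using f0 f1 by simp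
qed

lemma S_10_7: "\<forall>b\<in>set B3. b * P32 7 \<in> cs.span (set B10)"
proof -
  have f0: "P32 3 * P32 7 \<in> cs.span (set B10)"
    apply (rule rel_span[where d = 10 and k = 120 and cs = "[0, 0, (-35), 0, 84, 0, 70, 0]" and A = "{0,1,2,3,4,5,6,7,8,9,10}"])
    apply (rule B10_Mon)
    apply (intro Mon_P Mon_P32 Mon_1'; simp)
    apply simp
    apply simp
    apply (simp add: B10_def)
    done
  show ?thesis unfolding B3_def using f0 by simp
qed

lemma S_10_8: "\<forall>b\<in>set B2. b * P32 8 \<in> cs.span (set B10)"
proof -
  have f0: "P32 2 * P32 8 \<in> cs.span (set B10)"
    apply (rule rel_span[where d = 10 and k = 720 and cs = "[15, (-180), (-160), 480, 384, 180, 0, 0]" and A = "{0,1,2,3,4,5,6,7,8,9,10}"])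
    apply (rule B10_Mon)
    apply (intro Mon_P Mon_P32 Mon_1'; simp)
    apply simp
    apply simp
    apply (simp add: B10_def)
    done
  show ?thesis unfolding B2_def using f0 by simp
qed

lemma S_10_9: "\<forall>b\<in>set B1. b * P32 9 \<in> cs.span (set B10)"
proof -
  show ?thesis unfolding B1_def  by simp
qed

lemma S_10_10: "\<forall>b\<in>set B0. b * P32 10 \<in> cs.span (set B10)"
proof -
  have f0: "1 * P32 10 \<in> cs.span (set B10)"
    apply (rule rel_span[where d = 10 and k = 3600 and cs = "[35, (-335), (-910), 690, 1872, (-150), 500, 1860]" and A = "{0,1,2,3,4,5,6,7,8,9,10}"])
    apply (rule B10_Mon)
    apply (intro Mon_P Mon_P32 Mon_1'; simp)
    apply simp
    apply simp
    apply (simp add: B10_def)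
    done
  show ?thesis unfolding B0_def using f0 by simp
qed

lemma Mon10: "Mon 10 \<subseteq> cs.span (set B10)"
proof (rule Mon_step)
  fix i m assume i: "2 \<le> i" "i \<le> 10" and m: "m \<in> Mon (10 - i)"
  have "i = 2 \<or> i = 3 \<or> i = 4 \<or> i = 5 \<or> i = 6 \<or> i = 7 \<or> i = 8 \<or> i = 9 \<or> i = 10" using i by presburger
  then show "m * P32 i \<in> cs.span (set B10)"
  proof (elim disjE)
    assume "i = 2"
    then show ?thesis using span_times[OF subsetD[OF Mon8] S_10_2] m by simp
  next
    assume "i = 3"
    then show ?thesis using span_times[OF subsetD[OF Mon7] S_10_3] m by simp
  next
    assume "i = 4"
    then show ?thesis using span_times[OF subsetD[OF Mon6] S_10_4] m by simp
  next
    assume "i = 5"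
    then show ?thesis using span_times[OF subsetD[OF Mon5] S_10_5] m by simp
  next
    assume "i = 6"
    then show ?thesis using span_times[OF subsetD[OF Mon4] S_10_6] m by simp
  next
    assume "i = 7"
    then show ?thesis using span_times[OF subsetD[OF Mon3] S_10_7] m by simp
  next
    assume "i = 8"
    then show ?thesis using span_times[OF subsetD[OF Mon2] S_10_8] m by simp
  next
    assume "i = 9"
    then show ?thesis using span_times[OF subsetD[OF Mon1] S_10_9] m by simp
  next
    assume "i = 10"
    then show ?thesis using span_times[OF subsetD[OF Mon0] S_10_10] m by simp
  qed
qed simp

lemma dim10: "cs.dim (Mon 10) = 8"
  using cs.dim_unique[OF B10_Mon Mon10] B10_indep distinct_card by (simp add: B10_def)


section \<open>Hilbert series\<close>

lemma H_nth: "fps_nth (hilbert_series R32) d = int (cs.dim (Mon d))"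
  by (simp add: hilbert_series_def dim_graded)

lemma q_nth:
  fixes H :: "int fps"
  shows "fps_nth (H * ((1 - fps_X ^ 2) * (1 - fps_X ^ 3))) n =
    fps_nth H n - (if n < 2 then 0 else fps_nth H (n - 2)) - (if n < 3 then 0 else fps_nth H (n - 3)) + (if n < 5 then 0 else fps_nth H (n - 5))"
proof -
  have "(1 - fps_X ^ 2) * (1 - fps_X ^ 3) = (1 - fps_X ^ 2 - fps_X ^ 3 + fps_X ^ 5 :: int fps)"
    by (simp add: algebra_simps power_add[symmetric])
  then have "H * ((1 - fps_X ^ 2) * (1 - fps_X ^ 3)) = H - H * fps_X ^ 2 - H * fps_X ^ 3 + H * fps_X ^ 5"
    by (simp add: algebra_simps)
  then show ?thesis by (simp add: fps_X_power_mult_right_nth)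
qed

lemma hilbert_part:
  assumes "q = hilbert_series R32 * ((1 - fps_X ^ 2) * (1 - fps_X ^ 3))"
  shows "map (fps_nth q) [0..<11] = [1, 0, 0, 0, 1, 1, 1, 0, 1, 1, 1]"
proof -
  have d1: "cs.dim (Mon (Suc 0)) = 0" using dim1 by simp
  have u: "[0..<11] = [0,1,2,3,4,5,6,7,8,9,10::nat]" by (simp add: numeral_eq_Suc upt_rec)
  show ?thesis
    unfolding u using assms by (simp add: q_nth H_nth dim0 dim1 dim2 dim3 dim4 dim5 dim6 dim7 dim8 dim9 dim10 d1)
qed



section \<open>The witness W\<close>

definition W :: bipoly where
  "W = 97200 * Y_var ^ 7 + 1321920 * X_var * Y_var ^ 6 + 6930360 * X_var ^ 2 * Y_var ^ 5
     + 19167840 * X_var ^ 3 * Y_var ^ 4 + 29937600 * X_var ^ 4 * Y_var ^ 3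
     + 26282880 * X_var ^ 5 * Y_var ^ 2 + 12023640 * X_var ^ 6 * Y_var + 2216160 * X_var ^ 7"

definition M4 :: bipoly where "M4 = 2430 * P32 2 ^ 2 - 14580 * P32 4"
definition M5 :: bipoly where "M5 = 11340 * P32 5 - 5940 * P32 2 * P32 3"
definition M6 :: bipoly where
  "M6 = 2160 * P32 2 * P32 4 + 4860 * P32 6 - 495 * P32 2 ^ 3 - 1350 * P32 3 ^ 2"
definition M8 :: bipoly where
  "M8 = 225 * P32 2 ^ 2 * P32 4 + 2095 * P32 2 * P32 3 ^ 2 + 1440 * P32 4 ^ 2 + 3960 * P32 8
      - 3450 * P32 2 * P32 6 - 4002 * P32 3 * P32 5"

definition Lv :: bipoly where "Lv = - 3 * X_var - 2 * Y_var"

lemma hg_add: "homog d p \<Longrightarrow> homog d q \<Longrightarrow> homog d (p + q)" by (rule homog_add)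
lemma hg_diff: "homog d p \<Longrightarrow> homog d q \<Longrightarrow> homog d (p - q)" by (rule homog_diff)
lemma hg_minus: "homog d p \<Longrightarrow> homog d (- p)" by (rule homog_minus)
lemma hg_mult: "homog a p \<Longrightarrow> homog b q \<Longrightarrow> d = a + b \<Longrightarrow> homog d (p * q)" by (rule homog_mult')
lemma hg_power: "homog a p \<Longrightarrow> d = n * a \<Longrightarrow> homog d (p ^ n)" using homog_power by blast
lemma hg_num: "d = 0 \<Longrightarrow> homog d (numeral n)" using homog_numeral by blast
lemma hg_P: "d = i \<Longrightarrow> homog d (P32 i)" using homog_P32 by blast
lemma hg_X: "d = 1 \<Longrightarrow> homog d X_var" using homog_X by blast
lemma hg_Y: "d = 1 \<Longrightarrow> homog d Y_var" using homog_Y by blast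

lemmas hg_rules = hg_add hg_diff hg_minus hg_mult hg_power hg_num hg_P hg_X hg_Y

lemma homog_W: "homog 7 W"
  unfolding W_def by (intro hg_rules, simp_all, (simp_all)?)


lemma homog_M4: "homog 4 M4" unfolding M4_def by (intro hg_rules, simp_all, (simp_all)?)
lemma homog_M5: "homog 5 M5" unfolding M5_def by (intro hg_rules, simp_all, (simp_all)?)
lemma homog_M6: "homog 6 M6" unfolding M6_def by (intro hg_rules, simp_all, (simp_all)?)
lemma homog_M8: "homog 8 M8" unfolding M8_def by (intro hg_rules, simp_all, (simp_all)?)
lemma homog_Lv: "homog 1 Lv" unfolding Lv_def by (intro hg_rules, simp_all, (simp_all)?)

lemma homog_G:
  assumes "homog 1 l"
  shows "homog 8 (M4 * l ^ 4 + M5 * l ^ 3 + M6 * l ^ 2 + M8)" "homog 8 (W * l)"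
proof -
  have a: "homog 8 (M4 * l ^ 4)" using homog_mult[OF homog_M4 homog_power[OF assms, of 4]] by simp
  have b: "homog 8 (M5 * l ^ 3)" using homog_mult[OF homog_M5 homog_power[OF assms, of 3]] by simp
  have c: "homog 8 (M6 * l ^ 2)" using homog_mult[OF homog_M6 homog_power[OF assms, of 2]] by simp
  have d: "homog 8 M8" by (rule homog_M8)
  show "homog 8 (M4 * l ^ 4 + M5 * l ^ 3 + M6 * l ^ 2 + M8)"
    using a b c d by (intro homog_add)
  show "homog 8 (W * l)" using homog_mult[OF homog_W assms] by simp
qed

lemma ident_X: "M4 * X_var ^ 4 + M5 * X_var ^ 3 + M6 * X_var ^ 2 + M8 = W * X_var"
  apply (rule homog_eq'[where d = 8 and A = "{0,1,2,3,4,5,6,7,8}", OF homog_G[OF homog_X]])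
  apply simp
  apply (simp add: M4_def M5_def M6_def M8_def W_def)
  done

lemma ident_Y: "M4 * Y_var ^ 4 + M5 * Y_var ^ 3 + M6 * Y_var ^ 2 + M8 = W * Y_var"
  apply (rule homog_eq'[where d = 8 and A = "{0,1,2,3,4,5,6,7,8}", OF homog_G[OF homog_Y]])
  apply simp
  apply (simp add: M4_def M5_def M6_def M8_def W_def)
  done

lemma ident_L: "M4 * Lv ^ 4 + M5 * Lv ^ 3 + M6 * Lv ^ 2 + M8 = W * Lv"
  apply (rule homog_eq'[where d = 8 and A = "{0,1,2,3,4,5,6,7,8}", OF homog_G[OF homog_Lv]])
  apply simp
  apply (simp add: M4_def M5_def M6_def M8_def W_def Lv_def)
  done

lemma P32_L: "P32 m = 3 * X_var ^ m + 2 * Y_var ^ m + Lv ^ m"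
  by (simp add: P32_def Lv_def)

lemma WP: "W * P32 (Suc n) = M4 * P32 (n + 4) + M5 * P32 (n + 3) + M6 * P32 (n + 2) + M8 * P32 n"
proof -
  have "M4 * P32 (n + 4) + M5 * P32 (n + 3) + M6 * P32 (n + 2) + M8 * P32 n =
     3 * X_var ^ n * (M4 * X_var ^ 4 + M5 * X_var ^ 3 + M6 * X_var ^ 2 + M8)
   + 2 * Y_var ^ n * (M4 * Y_var ^ 4 + M5 * Y_var ^ 3 + M6 * Y_var ^ 2 + M8)
   + Lv ^ n * (M4 * Lv ^ 4 + M5 * Lv ^ 3 + M6 * Lv ^ 2 + M8)"
    unfolding P32_L power_add by (simp add: algebra_simps)
  also have "\<dots> = 3 * X_var ^ n * (W * X_var) + 2 * Y_var ^ n * (W * Y_var) + Lv ^ n * (W * Lv)"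
    by (simp only: ident_X ident_Y ident_L)
  also have "\<dots> = W * P32 (Suc n)"
    unfolding P32_L by (simp add: algebra_simps)
  finally show ?thesis by simp
qed

lemma R_const: "[:[:c:]:] \<in> R32" unfolding R32_def by (rule alg_gen.const)
lemma R_add: "a \<in> R32 \<Longrightarrow> b \<in> R32 \<Longrightarrow> a + b \<in> R32" unfolding R32_def by (rule alg_gen.add)
lemma R_mult: "a \<in> R32 \<Longrightarrow> b \<in> R32 \<Longrightarrow> a * b \<in> R32" unfolding R32_def by (rule alg_gen.mult)
lemma R_numeral: "numeral n \<in> R32"
proof -
  have "(numeral n :: bipoly) = [:[:numeral n:]:]" by (simp add: numeral_poly)
  then show ?thesis using R_const by metis
qed
lemma R_one: "1 \<in> R32"
proof -
  have "(1::bipoly) = [:[:1:]:]" by (metis one_pCons)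
  then show ?thesis using R_const by metis
qed
lemma R_zero: "0 \<in> R32"
proof -
  have "(0::bipoly) = [:[:0:]:]" by simp
  then show ?thesis using R_const by metis
qed
lemma R_minus: "a \<in> R32 \<Longrightarrow> - a \<in> R32"
proof -
  assume a: "a \<in> R32"
  have "(- 1 :: bipoly) = [:[:- 1:]:]" by (simp add: one_pCons)
  then have "(- 1 :: bipoly) \<in> R32" using R_const by metis
  then show ?thesis using R_mult[OF _ a] by fastforce
qed
lemma R_diff: "a \<in> R32 \<Longrightarrow> b \<in> R32 \<Longrightarrow> a - b \<in> R32"
  using R_add[OF _ R_minus] by (metis diff_conv_add_uminus)
lemma R_power: "a \<in> R32 \<Longrightarrow> a ^ n \<in> R32"
  by (induction n) (auto simp: R_one R_mult)

lemmas R_rules = R_add R_mult R_diff R_power R_numeral R32_P32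

lemma M_R: "M4 \<in> R32" "M5 \<in> R32" "M6 \<in> R32" "M8 \<in> R32"
  unfolding M4_def M5_def M6_def M8_def by (intro R_rules)+

lemma WP_R: "W * P32 (Suc n) \<in> R32"
  unfolding WP using M_R by (intro R_rules)

section \<open>W times the irrelevant ideal\<close>

lemma smult_const_add: "smult [:x + y:] p = smult [:x:] p + smult [:y:] p"
proof -
  have "[:x + y:] = [:x:] + [:y:]" by simp
  then show ?thesis by (metis smult_add_left)
qed

definition cst :: "bipoly \<Rightarrow> complex" where "cst p = coeff (coeff p 0) 0"

lemma cst_mult: "cst (a * b) = cst a * cst b"
  by (simp add: cst_def coeff_mult_0)

lemma cst_add: "cst (a + b) = cst a + cst b"
  by (simp add: cst_def)

lemma cst_P32: "2 \<le> i \<Longrightarrow> cst (P32 i) = 0"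
  using homog_P32[of i] unfolding homog_def cst_def by fastforce

lemma W_cst: "p \<in> R32 \<Longrightarrow> W * (p - [:[:cst p:]:]) \<in> R32"
  unfolding R32_def
proof (induction rule: alg_gen.induct)
  case (const c)
  then show ?case using R_zero by (simp add: cst_def R32_def)
next
  case (gen g)
  then obtain i where i: "2 \<le> i" "g = P32 i" by auto
  then obtain n where "i = Suc n" by (cases i) auto
  then show ?case using i cst_P32[OF i(1)] WP_R[of n] by (simp add: R32_def)
next
  case (add a b)
  have "W * (a + b - [:[:cst (a + b):]:]) = W * (a - [:[:cst a:]:]) + W * (b - [:[:cst b:]:])"
  proof -
    have e: "[:[:cst (a + b):]:] = [:[:cst a:]:] + [:[:cst b:]:]" by (simp add: cst_add)
    show ?thesis unfolding e by (simp add: algebra_simps smult_const_add)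
  qed
  then show ?case using add.IH R_add unfolding R32_def by metis
next
  case (mult a b)
  have "W * (a * b - [:[:cst (a * b):]:]) = W * (a - [:[:cst a:]:]) * b + [:[:cst a:]:] * (W * (b - [:[:cst b:]:]))"
    by (simp add: cst_mult algebra_simps)
  moreover have "W * (a - [:[:cst a:]:]) * b \<in> R32"
    using mult.IH(1) mult.hyps(2) R_mult unfolding R32_def by metis
  moreover have "[:[:cst a:]:] * (W * (b - [:[:cst b:]:])) \<in> R32"
    using mult.IH(2) R_mult R_const unfolding R32_def by metis
  ultimately show ?case using R_add unfolding R32_def by metis
qed

lemma W_irrelevant: "p \<in> irrelevant R32 \<Longrightarrow> W * p \<in> R32"
  using W_cst[of p] unfolding irrelevant_def cst_def by simp

lemma W_notin: "W \<notin> R32"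
proof
  assume "W \<in> R32"
  then have "hcomp 7 W \<in> cs.span (Mon 7)" by (rule R_comp)
  then have "W \<in> cs.span (Mon 7)" using comp_self[OF homog_W] by simp
  moreover have "cs.span (Mon 7) \<subseteq> cs.span (set B7)"
    using cs.span_mono[OF Mon7] cs.span_span by simp
  ultimately have s1: "W \<in> cs.span (set B7)" by blast
  have s2: "\<forall>s\<in>set B7. psi [(760, 0), (516, 1), (-80, 2), (5, 3)] s = 0"
    by (simp add: B7_def psi_def)
  have "psi [(760, 0), (516, 1), (-80, 2), (5, 3)] W = 0" using psi_span s1 s2 by blast
  moreover have "psi [(760, 0), (516, 1), (-80, 2), (5, 3)] W \<noteq> 0"
    by (simp add: W_def psi_def)
  ultimately show False by simp
qed

section \<open>Depth\<close>

lemma gen_ideal_Nil: "gen_ideal R32 [] = {0}"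
  unfolding gen_ideal_def using R_zero by auto

lemma gen_ideal_single: "gen_ideal R32 [f] = {r * f | r. r \<in> R32}"
proof
  show "gen_ideal R32 [f] \<subseteq> {r * f | r. r \<in> R32}"
    unfolding gen_ideal_def by auto
  show "{r * f | r. r \<in> R32} \<subseteq> gen_ideal R32 [f]"
  proof
    fix x assume "x \<in> {r * f | r. r \<in> R32}"
    then obtain r where r: "r \<in> R32" "x = r * f" by blast
    have "x = (\<Sum>i<length [f]. (\<lambda>_. r) i * [f] ! i)" using r by simp
    moreover have "\<forall>i. (\<lambda>_. r) i \<in> R32" using r by simp
    ultimately show "x \<in> gen_ideal R32 [f]" unfolding gen_ideal_def by (intro CollectI exI[of _ "\<lambda>_. r"]) simp
  qed
qed

lemma regular_short: "regular_seq R32 fs \<Longrightarrow> length fs \<le> 1"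
proof (rule ccontr)
  assume reg: "regular_seq R32 fs" and len: "\<not> length fs \<le> 1"
  then have len2: "1 < length fs" by simp
  let ?f1 = "fs ! 0" and ?f2 = "fs ! 1"
  have irr: "?f1 \<in> irrelevant R32" "?f2 \<in> irrelevant R32"
  proof -
    have "set fs \<subseteq> irrelevant R32" using reg unfolding regular_seq_def by blast
    moreover have "?f1 \<in> set fs" "?f2 \<in> set fs" using len2 by (auto intro: nth_mem)
    ultimately show "?f1 \<in> irrelevant R32" "?f2 \<in> irrelevant R32" by auto
  qed
  have R1: "?f1 \<in> R32" "?f2 \<in> R32" using irr unfolding irrelevant_def by auto
  have cond: "\<forall>i<length fs. \<forall>a\<in>R32. a * fs ! i \<in> gen_ideal R32 (take i fs) \<longrightarrow> a \<in> gen_ideal R32 (take i fs)"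
    using reg unfolding regular_seq_def by blast
  have nz: "?f1 \<noteq> 0"
  proof
    assume "?f1 = 0"
    then have "1 * ?f1 \<in> gen_ideal R32 (take 0 fs)" by (simp add: gen_ideal_Nil)
    moreover have "0 < length fs" using len2 by linarith
    ultimately have "(1::bipoly) \<in> gen_ideal R32 (take 0 fs)" using cond R_one by blast
    then show False by (simp add: gen_ideal_Nil)
  qed
  have t1: "take 1 fs = [?f1]" using len2 by (cases fs) auto
  have a: "W * ?f1 \<in> R32" by (rule W_irrelevant[OF irr(1)])
  have "W * ?f1 * ?f2 = (W * ?f2) * ?f1" by (simp add: algebra_simps)
  moreover have "W * ?f2 \<in> R32" by (rule W_irrelevant[OF irr(2)])
  ultimately have "W * ?f1 * ?f2 \<in> gen_ideal R32 (take 1 fs)"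
    unfolding t1 gen_ideal_single by blast
  then have "W * ?f1 \<in> gen_ideal R32 (take 1 fs)" using cond len2 a by auto
  then obtain r where r: "r \<in> R32" "W * ?f1 = r * ?f1" unfolding t1 gen_ideal_single by blast
  then have "W = r" using nz by simp
  then show False using W_notin r by simp
qed

lemma depth_le: "depth R32 \<le> 1"
  unfolding depth_def
proof (rule Sup_least)
  fix x assume "x \<in> {enat (length fs) |fs. regular_seq R32 fs}"
  then obtain fs where "x = enat (length fs)" "regular_seq R32 fs" by blast
  then show "x \<le> 1" using regular_short by (simp add: one_enat_def)
qed

section \<open>Krull dimension\<close>

definition I1 :: "bipoly set" where "I1 = {p \<in> R32. coeff p 0 = 0}"

lemma ideal_I0: "prime_in R32 {0}"
proof -
  have "(1::bipoly) \<notin> {0}" by simp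
  then have "{0} \<noteq> R32" using R_one by blast
  then show ?thesis unfolding prime_in_def ideal_in_def using R_zero by auto
qed

lemma ideal_I1: "prime_in R32 I1"
proof -
  have "(1::bipoly) \<notin> I1" by (simp add: I1_def)
  then have "I1 \<noteq> R32" using R_one by blast
  then show ?thesis unfolding prime_in_def ideal_in_def using R_zero R_add R_mult
    by (auto simp: coeff_mult_0 I1_def)
qed

lemma ideal_I2: "prime_in R32 (irrelevant R32)"
proof -
  have "(1::bipoly) \<notin> irrelevant R32" by (simp add: irrelevant_def)
  then have "irrelevant R32 \<noteq> R32" using R_one by blast
  then show ?thesis unfolding prime_in_def ideal_in_def using R_zero R_add R_mult
    by (auto simp: coeff_mult_0 irrelevant_def)
qed

definition E0 :: bipoly where "E0 = P32 2 ^ 3 - 3 * P32 3 ^ 2"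

lemma eval2_0: "eval2 p x 0 = poly (coeff p 0) x"
  by (simp add: eval2_def poly_0_coeff_0)

lemma E0_I1: "E0 \<in> I1"
proof -
  have "poly (coeff E0 0) x = 0" for x
    unfolding eval2_0[symmetric] by (simp add: E0_def algebra_simps power2_eq_square power3_eq_cube)
  then have "coeff E0 0 = 0" using poly_all_0_iff_0 by blast
  moreover have "E0 \<in> R32" unfolding E0_def by (intro R_rules)
  ultimately show ?thesis unfolding I1_def by simp
qed

lemma E0_nz: "E0 \<noteq> 0"
proof
  assume "E0 = 0"
  then have "eval2 E0 1 1 = 0" by simp
  then show False by (simp add: E0_def)
qed

lemma P2_I2: "P32 2 \<in> irrelevant R32" "P32 2 \<notin> I1"
proof -
  show "P32 2 \<in> irrelevant R32"
    unfolding irrelevant_def using R32_P32 cst_P32[of 2] by (simp add: cst_def)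
  have "poly (coeff (P32 2) 0) 1 \<noteq> 0" unfolding eval2_0[symmetric] by simp
  then show "P32 2 \<notin> I1" unfolding I1_def by auto
qed

lemma I1_I2: "I1 \<subseteq> irrelevant R32"
  unfolding I1_def irrelevant_def by auto

lemma krull_ge: "2 \<le> krull_dim R32"
proof -
  define ch where "ch = (\<lambda>i::nat. if i = 0 then {0} else if i = 1 then I1 else irrelevant R32)"
  have "(\<forall>i\<le>2. prime_in R32 (ch i)) \<and> (\<forall>i<2. ch i \<subset> ch (Suc i))"
  proof (intro conjI allI impI)
    fix i :: nat assume "i \<le> 2"
    then show "prime_in R32 (ch i)" unfolding ch_def using ideal_I0 ideal_I1 ideal_I2 by auto
  next
    fix i :: nat assume "i < 2"
    then consider "i = 0" | "i = 1" by linarith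
    then show "ch i \<subset> ch (Suc i)"
    proof cases
      case 1
      have "{0} \<subset> I1" using E0_I1 E0_nz R_zero unfolding I1_def by auto
      then show ?thesis using 1 unfolding ch_def by simp
    next
      case 2
      have "I1 \<subset> irrelevant R32" using I1_I2 P2_I2 by auto
      then show ?thesis using 2 unfolding ch_def by simp
    qed
  qed
  then have "enat 2 \<in> {enat n | n. \<exists>ch :: nat \<Rightarrow> bipoly set.
      (\<forall>i\<le>n. prime_in R32 (ch i)) \<and> (\<forall>i<n. ch i \<subset> ch (Suc i))}" by blast
  then have "enat 2 \<le> krull_dim R32" unfolding krull_dim_def by (rule Sup_upper)
  then show ?thesis by (simp add: numeral_eq_enat)
qed

lemma not_CM: "\<not> cohen_macaulay R32"
proof
  assume "cohen_macaulay R32"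
  then have "depth R32 = krull_dim R32" unfolding cohen_macaulay_def .
  then show False using depth_le krull_ge by (metis not_le one_less_numeral_iff order_trans semiring_norm(76) order.strict_trans1)
qed


theorem proposition5p12:
  fixes q :: "int fps"
  assumes "q = hilbert_series R32 * ((1 - fps_X ^ 2) * (1 - fps_X ^ 3))"
  shows "map (fps_nth q) [0..<11] = [1, 0, 0, 0, 1, 1, 1, 0, 1, 1, 1]
         \<and> \<not> cohen_macaulay R32"
  using hilbert_part[OF assms] not_CM by simp

end
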